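(* Let $n \ge 2$ and let $\vdash$ be derivability in any proof system $\mathcal{S}$ over located sequents (for truth-values $v_1,\dots,v_n$) whose object language contains the unary operators $N_1,\dots,N_n$ and which contains the structural rules listed in the context (initial sequents, shifting, coordination, weakening, cut), possibly together with further rules. Suppose the empty located sequent ${} : {}$ (both sides empty) is not derivable in $\mathcal{S}$. If $v_j$ and $v_k$ ($1 \le j,k \le n$) are both truths (in the sense defined in the context), then $j = k$. Equivalently: if there are two truths $v_j, v_k$ with $j \neq k$, then the empty sequent ${}:{}$ is derivable in $\mathcal{S}$.
   Context: Fix $n \ge 2$ and truth-values $\mathcal{V}=\{v_1,\dots,v_n\}$. A located formula is a pair $(\varphi,k)$ with $\varphi$ an object-language formula and $k\in\{1,\dots,n\}$ (intended meaning: $\varphi$ has value $v_k$). A located sequent is $\Gamma : \Delta$ with $\Gamma,\Delta$ finite (possibly empty) sets of located formulas; "$\Gamma:\Delta,(\varphi,i)$" denotes $\Gamma : \Delta\cup\{(\varphi,i)\}$, and "$\Gamma:\Delta,\{(\varphi,m)\mid m\neq i\}$" denotes $\Gamma:\Delta\cup\{(\varphi,m)\mid 1\le m\le n,\ m\ne i\}$. The proof system contains at least the following rules, for all finite $\Gamma,\Delta,\Gamma',\Delta'$, formulas $\varphi$ and indices: (initial) $\Gamma,(\varphi,i) : \Delta,(\varphi,i)$ is derivable for every $1\le i\le n$; (shift right $\overrightarrow{s}_i$) from $\Gamma,(\varphi,i):\Delta$ infer $\Gamma:\Delta,\{(\varphi,m)\mid m\ne i\}$; (shift left $\overleftarrow{s}_{i,j}$,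 $j\ne i$) from $\Gamma:\Delta,(\varphi,i)$ infer $\Gamma,(\varphi,j):\Delta$; (coordination $c_{i,j}$, $i\ne j$) from $\Gamma:\Delta,(\varphi,i)$ and $\Gamma:\Delta,(\varphi,j)$ infer $\Gamma:\Delta$; (weakening) from $\Gamma:\Delta$ infer $\Gamma\cup\Gamma':\Delta\cup\Delta'$; (cut) from $\Gamma:\Delta,(\varphi,i)$ and $\Gamma,(\varphi,i):\Delta$ infer $\Gamma:\Delta$. Definition (truth): $v_j$ is a truth iff for every $1\le i\le n$, every formula $\varphi$ and all finite $\Gamma,\Delta$: the sequent $\Gamma:\Delta,(N_i\varphi,j)$ is derivable iff the sequent $\Gamma:\Delta,\{(\varphi,m)\mid m\ne i\}$ is derivable. *)

theory Defs
  imports Main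
begin

text \<open>Located formulas are pairs (phi, k) with phi :: 'f an object-language formula
and k a truth-value index in {1..n}.  A located sequent Gamma : Delta is a pair of
finite sets of located formulas.  A proof system is represented by its derivability
predicate D :: located set \<Rightarrow> located set \<Rightarrow> bool.\<close>

type_synonym 'f located = "'f \<times> nat"

definition located_set :: "nat \<Rightarrow> 'f located set \<Rightarrow> bool" where
  "located_set n G \<longleftrightarrow> finite G \<and> (\<forall>x\<in>G. snd x \<in> {1..n})"

definition structural_system ::
  "nat \<Rightarrow> ('f located set \<Rightarrow> 'f located set \<Rightarrow> bool) \<Rightarrow> bool" where
  "structural_system n D \<longleftrightarrow>
     (\<forall>G Dl phi i. located_set n G \<longrightarrow> located_set n Dl \<longrightarrow> i \<in> {1..n} \<longrightarrow>
        D (insert (phi, i) G) (insert (phi, i) Dl))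
   \<and> (\<forall>G Dl phi i. located_set n G \<longrightarrow> located_set n Dl \<longrightarrow> i \<in> {1..n} \<longrightarrow>
        D (insert (phi, i) G) Dl \<longrightarrow> D G (Dl \<union> {(phi, m) | m. m \<in> {1..n} \<and> m \<noteq> i}))
   \<and> (\<forall>G Dl phi i j. located_set n G \<longrightarrow> located_set n Dl \<longrightarrow> i \<in> {1..n} \<longrightarrow>
        j \<in> {1..n} \<longrightarrow> j \<noteq> i \<longrightarrow>
        D G (insert (phi, i) Dl) \<longrightarrow> D (insert (phi, j) G) Dl)
   \<and> (\<forall>G Dl phi i j. located_set n G \<longrightarrow> located_set n Dl \<longrightarrow> i \<in> {1..n} \<longrightarrow>
        j \<in> {1..n} \<longrightarrow> i \<noteq> j \<longrightarrow>
        D G (insert (phi, i) Dl) \<longrightarrow> D G (insert (phi, j) Dl) \<longrightarrow> D G Dl)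
   \<and> (\<forall>G Dl G' Dl'. located_set n G \<longrightarrow> located_set n Dl \<longrightarrow>
        located_set n G' \<longrightarrow> located_set n Dl' \<longrightarrow>
        D G Dl \<longrightarrow> D (G \<union> G') (Dl \<union> Dl'))
   \<and> (\<forall>G Dl phi i. located_set n G \<longrightarrow> located_set n Dl \<longrightarrow> i \<in> {1..n} \<longrightarrow>
        D G (insert (phi, i) Dl) \<longrightarrow> D (insert (phi, i) G) Dl \<longrightarrow> D G Dl)"

definition is_truth ::
  "nat \<Rightarrow> ('f located set \<Rightarrow> 'f located set \<Rightarrow> bool) \<Rightarrow> (nat \<Rightarrow> 'f \<Rightarrow> 'f) \<Rightarrow> nat \<Rightarrow> bool" where
  "is_truth n D N j \<longleftrightarrow>
     (\<forall>i phi G Dl. i \<in> {1..n} \<longrightarrow> located_set n G \<longrightarrow> located_set n Dl \<longrightarrow>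
        (D G (insert (N i phi, j) Dl) \<longleftrightarrow>
         D G (Dl \<union> {(phi, m) | m. m \<in> {1..n} \<and> m \<noteq> i})))"

end

theory Submission
  imports Defs
begin

theorem mainTheorem1:
  fixes n :: nat
    and D :: "'f located set \<Rightarrow> 'f located set \<Rightarrow> bool"
    and N :: "nat \<Rightarrow> 'f \<Rightarrow> 'f"
    and j k :: nat
  assumes "n \<ge> 2"
    and "structural_system n D"
    and "\<not> D {} {}"
    and "j \<in> {1..n}" and "k \<in> {1..n}"
    and "is_truth n D N j" and "is_truth n D N k"
  shows "j = k"
proof (rule ccontr)
  assume jk: "j \<noteq> k"
  note S = assms(2)[unfolded structural_system_def]
  have init: "\<And>G Dl phi i. located_set n G \<Longrightarrow> located_set n Dl \<Longrightarrow> i \<in> {1..n} \<Longrightarrow>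
        D (insert (phi, i) G) (insert (phi, i) Dl)" using conjunct1[OF S] by blast
  have shr: "\<And>G Dl phi i. located_set n G \<Longrightarrow> located_set n Dl \<Longrightarrow> i \<in> {1..n} \<Longrightarrow>
        D (insert (phi, i) G) Dl \<Longrightarrow> D G (Dl \<union> {(phi, m) | m. m \<in> {1..n} \<and> m \<noteq> i})"
    using conjunct1[OF conjunct2[OF S]] by blast
  have coord: "\<And>G Dl phi i j. located_set n G \<Longrightarrow> located_set n Dl \<Longrightarrow> i \<in> {1..n} \<Longrightarrow>
        j \<in> {1..n} \<Longrightarrow> i \<noteq> j \<Longrightarrow>
        D G (insert (phi, i) Dl) \<Longrightarrow> D G (insert (phi, j) Dl) \<Longrightarrow> D G Dl"
    using conjunct1[OF conjunct2[OF conjunct2[OF conjunct2[OF S]]]] by blast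
  note Tj = assms(6)[unfolded is_truth_def, rule_format]
  note Tk = assms(7)[unfolded is_truth_def, rule_format]
  have le: "located_set n {}" by (simp add: located_set_def)
  have one: "(1::nat) \<in> {1..n}" using assms(1) by auto
  fix chi :: 'f
  define psi where "psi = N 1 chi"
  have lj: "located_set n {(psi, j)}" using assms(4) by (simp add: located_set_def)
  have 1: "D {(psi, j)} {(psi, j)}" using init[OF le le assms(4)] by simp
  have 2: "D {(psi, j)} {(psi, k)}"
  proof -
    have "D {(psi, j)} ({} \<union> {(chi, m) | m. m \<in> {1..n} \<and> m \<noteq> 1})"
      using 1 Tj[OF one lj le, of chi] unfolding psi_def by simp
    then show ?thesis using Tk[OF one lj le, of chi] unfolding psi_def by simp
  qed
  have 3: "D {(psi, j)} {}"
    using coord[OF lj le assms(4) assms(5) jk] 1 2 by simp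
  have 4: "D {} ({} \<union> {(psi, m) | m. m \<in> {1..n} \<and> m \<noteq> j})"
    using shr[OF le le assms(4)] 3 by simp
  have 5: "D {} {(N j psi, j)}" using Tj[OF assms(4) le le, of psi] 4 by simp
  have 6: "D {} {(N j psi, k)}" using Tk[OF assms(4) le le, of psi] 4 by simp
  have "D {} {}" using coord[OF le le assms(4) assms(5) jk] 5 6 by simp
  then show False using assms(3) by simp
qed

end
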